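(* Let $M$ be a commutative monoid. A nonempty closed subset $X$ of the terminal space $\mathcal S(M)$ is irreducible if and only if $\mathcal K(X)=\bigcap_{I\in X}I$ is a strongly irreducible ideal of $M$.
   Context: A monoid is a commutative monoid $(M,\cdot,1)$. An ideal of $M$ is a subset $I\subseteq M$ such that $im\in I$ for all $i\in I$, $m\in M$; it is proper if $I\neq M$. A proper ideal $K$ of $M$ is strongly irreducible if for all ideals $I,J$ of $M$, $I\cap J\subseteq K$ implies $I\subseteq K$ or $J\subseteq K$. $\mathcal S(M)$ is the set of all strongly irreducible ideals of $M$. For $X\subseteq\mathcal S(M)$, $\mathcal K(X)=\bigcap_{I\in X}I$, and $\mathcal{HK}(X)=\{J\in\mathcal S(M)\mid J\supseteq\mathcal K(X)\}$ if $X\neq\emptyset$, $\mathcal{HK}(\emptyset)=\emptyset$. The terminal space of $M$ is the set $\mathcal S(M)$ with the topology whose closed sets are exactly the sets $\mathcal{HK}(X)$, $X\subseteq\mathcal S(M)$. A subset $Y$ of a topological space is irreducible if whenever $Y\subseteq Y_1\cup Y_2$ with $Y_1,Y_2$ closed, then $Y\subseteq Y_1$ or $Y\subseteq Y_2$. *)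

theory Defs
  imports Main
begin

text \<open>The commutative monoid M is the whole type 'a of class comm_monoid_mult.\<close>

definition monoid_ideal :: "'a::comm_monoid_mult set \<Rightarrow> bool" where
  "monoid_ideal I \<longleftrightarrow> (\<forall>i\<in>I. \<forall>m. i * m \<in> I)"

definition strongly_irreducible :: "'a::comm_monoid_mult set \<Rightarrow> bool" where
  "strongly_irreducible K \<longleftrightarrow> monoid_ideal K \<and> K \<noteq> UNIV \<and>
     (\<forall>I J. monoid_ideal I \<longrightarrow> monoid_ideal J \<longrightarrow> I \<inter> J \<subseteq> K \<longrightarrow> I \<subseteq> K \<or> J \<subseteq> K)"

definition SI :: "'a::comm_monoid_mult set set" where
  "SI = {K. strongly_irreducible K}"

definition KK :: "'a::comm_monoid_mult set set \<Rightarrow> 'a set" where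
  "KK X = \<Inter>X"

definition HK :: "'a::comm_monoid_mult set set \<Rightarrow> 'a set set" where
  "HK X = (if X = {} then {} else {J \<in> SI. KK X \<subseteq> J})"

definition terminal_closed :: "'a::comm_monoid_mult set set \<Rightarrow> bool" where
  "terminal_closed Y \<longleftrightarrow> (\<exists>X \<subseteq> SI. Y = HK X)"

definition terminal_irreducible :: "'a::comm_monoid_mult set set \<Rightarrow> bool" where
  "terminal_irreducible Y \<longleftrightarrow> (\<forall>Y1 Y2. terminal_closed Y1 \<longrightarrow> terminal_closed Y2 \<longrightarrow>
      Y \<subseteq> Y1 \<union> Y2 \<longrightarrow> Y \<subseteq> Y1 \<or> Y \<subseteq> Y2)"

end

theory Submission
  imports Defs
begin

lemma closed_char:
  assumes "terminal_closed Y"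
  shows "Y = {P \<in> SI. KK Y \<subseteq> P}"
proof -
  obtain Z where Z: "Z \<subseteq> SI" "Y = HK Z" using assms unfolding terminal_closed_def by blast
  show ?thesis
  proof (cases "Z = {}")
    case True
    then show ?thesis using Z by (auto simp add: HK_def KK_def SI_def strongly_irreducible_def)
  next
    case False
    then have Y: "Y = {J \<in> SI. \<Inter>Z \<subseteq> J}" using Z by (simp add: HK_def KK_def)
    have "Z \<subseteq> Y" using Y Z(1) by auto
    then have "\<Inter>Y \<subseteq> \<Inter>Z" by auto
    moreover have "\<Inter>Z \<subseteq> \<Inter>Y" using Y by auto
    ultimately have "\<Inter>Y = \<Inter>Z" by auto
    then show ?thesis using Y by (simp add: KK_def)
  qed
qed

lemma closed_intro:
  assumes "Y \<subseteq> SI" "\<And>P. P \<in> SI \<Longrightarrow> KK Y \<subseteq> P \<Longrightarrow> P \<in> Y"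
  shows "terminal_closed Y"
proof (cases "Y = {}")
  case True
  then show ?thesis unfolding terminal_closed_def HK_def by auto
next
  case False
  have "Y = HK Y" using assms False unfolding HK_def KK_def by auto
  then show ?thesis using assms unfolding terminal_closed_def by blast
qed

theorem theorem2p6:
  fixes X :: "'a::comm_monoid_mult set set"
  assumes "X \<subseteq> SI" and "X \<noteq> {}" and "terminal_closed X"
  shows "terminal_irreducible X \<longleftrightarrow> strongly_irreducible (KK X)"
proof
  assume irr: "terminal_irreducible X"
  have idl: "monoid_ideal (KK X)"
    using assms(1) unfolding KK_def SI_def strongly_irreducible_def monoid_ideal_def by blast
  have prp: "KK X \<noteq> UNIV"
    using assms(1,2) unfolding KK_def SI_def strongly_irreducible_def by blast
  have "I \<subseteq> KK X \<or> J \<subseteq> KK X"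
    if I: "monoid_ideal I" and J: "monoid_ideal J" and IJ: "I \<inter> J \<subseteq> KK X" for I J
  proof -
    define Y1 where "Y1 = {P \<in> X. I \<subseteq> P}"
    define Y2 where "Y2 = {P \<in> X. J \<subseteq> P}"
    have cX: "X = {P \<in> SI. KK X \<subseteq> P}" using closed_char[OF assms(3)] .
    have c1: "terminal_closed Y1"
    proof (rule closed_intro)
      show "Y1 \<subseteq> SI" using assms(1) Y1_def by auto
      fix P assume P: "P \<in> SI" "KK Y1 \<subseteq> P"
      have "KK X \<subseteq> KK Y1" "I \<subseteq> KK Y1" unfolding Y1_def KK_def by auto
      then have "KK X \<subseteq> P" "I \<subseteq> P" using P by auto
      moreover have "P \<in> X" using P(1) \<open>KK X \<subseteq> P\<close> cX by blast
      ultimately show "P \<in> Y1" unfolding Y1_def by auto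
    qed
    have c2: "terminal_closed Y2"
    proof (rule closed_intro)
      show "Y2 \<subseteq> SI" using assms(1) Y2_def by auto
      fix P assume P: "P \<in> SI" "KK Y2 \<subseteq> P"
      have "KK X \<subseteq> KK Y2" "J \<subseteq> KK Y2" unfolding Y2_def KK_def by auto
      then have "KK X \<subseteq> P" "J \<subseteq> P" using P by auto
      moreover have "P \<in> X" using P(1) \<open>KK X \<subseteq> P\<close> cX by blast
      ultimately show "P \<in> Y2" unfolding Y2_def by auto
    qed
    have "X \<subseteq> Y1 \<union> Y2"
    proof
      fix P assume P: "P \<in> X"
      then have "strongly_irreducible P" using assms(1) SI_def by auto
      moreover have "I \<inter> J \<subseteq> P" using IJ P unfolding KK_def by auto
      ultimately have "I \<subseteq> P \<or> J \<subseteq> P" using I J unfolding strongly_irreducible_def by blast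
      then show "P \<in> Y1 \<union> Y2" using P Y1_def Y2_def by auto
    qed
    then have "X \<subseteq> Y1 \<or> X \<subseteq> Y2" using irr c1 c2 unfolding terminal_irreducible_def by blast
    then show ?thesis unfolding Y1_def Y2_def KK_def by auto
  qed
  then show "strongly_irreducible (KK X)" using idl prp unfolding strongly_irreducible_def by blast
next
  assume si: "strongly_irreducible (KK X)"
  have cX: "X = {P \<in> SI. KK X \<subseteq> P}" using closed_char[OF assms(3)] .
  have KX: "KK X \<in> X" using si cX SI_def by auto
  show "terminal_irreducible X"
    unfolding terminal_irreducible_def
  proof (intro allI impI)
    fix Y1 Y2 :: "'a set set"
    assume c1: "terminal_closed Y1" and c2: "terminal_closed Y2" and sub: "X \<subseteq> Y1 \<union> Y2"
    have gen: "X \<subseteq> Y" if c: "terminal_closed Y" and k: "KK X \<in> Y" for Y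
    proof
      fix P assume P: "P \<in> X"
      have "KK Y \<subseteq> KK X" using k unfolding KK_def by auto
      moreover have "KK X \<subseteq> P" using P unfolding KK_def by auto
      moreover have "P \<in> SI" using P assms(1) by auto
      ultimately have "P \<in> {P \<in> SI. KK Y \<subseteq> P}" by auto
      then show "P \<in> Y" using closed_char[OF c] by simp
    qed
    show "X \<subseteq> Y1 \<or> X \<subseteq> Y2" using KX sub gen c1 c2 by blast
  qed
qed

end
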